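(* As $P_1P_2P_3$ ranges over all 3-periodics of $\mathcal{E}$, the Mittenpunkt $X_9^\dagger$ of the focus-inversive triangle moves along the circle with center and radius \[C_9^\dagger=\left(-c\left(1+\frac{\rho^2}{2b^2}\right),\,0\right),\qquad R_9^\dagger=\rho^2\,\frac{2a^2-b^2-\delta}{2ab^2}.\] Moreover, the inversion of $C_9^\dagger$ in the circle of radius $\rho$ centered at $f_1$ is $\left(-\frac{a^2+b^2}{c},0\right)$.
   Context: Let $a>b>0$ and let $\mathcal{E}$ be the ellipse $x^2/a^2+y^2/b^2=1$ (the elliptic billiard). Set $c=\sqrt{a^2-b^2}$, $\delta=\sqrt{a^4-a^2b^2+b^4}$, and let the foci be $f_1=(-c,0)$, $f_2=(c,0)$. A 3-periodic is a triangle $P_1P_2P_3$ with vertices on $\mathcal{E}$ such that at each vertex the normal to $\mathcal{E}$ bisects the angle formed by the two sides meeting at that vertex; these form a one-parameter family (there is one through every point of $\mathcal{E}$). Fix $\rho>0$. The focus-inversive triangle of a 3-periodic $P_1P_2P_3$ is the triangle with vertices $P_i^\dagger=f_1+(\rho/d_{1,i})^2(P_i-f_1)$, where $d_{1,i}=|P_i-f_1|$, i.e. the inversions of the $P_i$ in the circle of radius $\rho$ centered at $f_1$. The Mittenpunkt $X_9$ of a triangle is the point of concurrence of the lines joining each excenter to the midpoint of the corresponding side (equivalently, the point with barycentric coordinates $a_s(s-a_s):b_s(s-b_s):c_s(s-c_s)$, where $a_s,b_s,c_s$ are the side lengths and $s$ the semiperimeter). *)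

theory Defs
  imports "HOL-Analysis.Analysis"
begin

type_synonym pt = "real \<times> real"

definition on_ellipse :: "real \<Rightarrow> real \<Rightarrow> pt \<Rightarrow> bool" where
  "on_ellipse a b P \<longleftrightarrow> (fst P)^2 / a^2 + (snd P)^2 / b^2 = 1"

text \<open>Outward normal direction of the ellipse at P (gradient of x^2/a^2+y^2/b^2).\<close>
definition ell_normal :: "real \<Rightarrow> real \<Rightarrow> pt \<Rightarrow> pt" where
  "ell_normal a b P = (fst P / a^2, snd P / b^2)"

definition cross2 :: "pt \<Rightarrow> pt \<Rightarrow> real" where
  "cross2 u v = fst u * snd v - snd u * fst v"

text \<open>At vertex P with neighbours Q, R: the normal line at P bisects the angle QPR,
  i.e. the sum of the unit vectors from P towards Q and towards R is parallel to the normal.\<close>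
definition normal_bisects :: "real \<Rightarrow> real \<Rightarrow> pt \<Rightarrow> pt \<Rightarrow> pt \<Rightarrow> bool" where
  "normal_bisects a b P Q R \<longleftrightarrow>
     cross2 ((1 / norm (Q - P)) *\<^sub>R (Q - P) + (1 / norm (R - P)) *\<^sub>R (R - P))
            (ell_normal a b P) = 0"

definition three_periodic :: "real \<Rightarrow> real \<Rightarrow> pt \<Rightarrow> pt \<Rightarrow> pt \<Rightarrow> bool" where
  "three_periodic a b P1 P2 P3 \<longleftrightarrow>
     on_ellipse a b P1 \<and> on_ellipse a b P2 \<and> on_ellipse a b P3 \<and>
     P1 \<noteq> P2 \<and> P2 \<noteq> P3 \<and> P1 \<noteq> P3 \<and>
     normal_bisects a b P1 P2 P3 \<and> normal_bisects a b P2 P3 P1 \<and>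
     normal_bisects a b P3 P1 P2"

definition invert :: "pt \<Rightarrow> real \<Rightarrow> pt \<Rightarrow> pt" where
  "invert Z rho P = Z + (rho / dist P Z)^2 *\<^sub>R (P - Z)"

text \<open>Mittenpunkt X9: barycentrics a_s(s-a_s) : b_s(s-b_s) : c_s(s-c_s), normalised.\<close>
definition mittenpunkt :: "pt \<Rightarrow> pt \<Rightarrow> pt \<Rightarrow> pt" where
  "mittenpunkt A B C =
    (let la = dist B C; lb = dist C A; lc = dist A B; s = (la + lb + lc) / 2;
         wa = la * (s - la); wb = lb * (s - lb); wc = lc * (s - lc)
     in (1 / (wa + wb + wc)) *\<^sub>R (wa *\<^sub>R A + wb *\<^sub>R B + wc *\<^sub>R C))"

end

theory Submission
  imports Defs
begin

lemma cubic_vieta: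
  fixes z1 z2 z3 B C D :: complex
  assumes d12: "z1 \<noteq> z2" and d13: "z1 \<noteq> z3" and d23: "z2 \<noteq> z3"
    and h1: "z1^3 + B* z1^2 + C* z1 + D = 0"
    and h2: "z2^3 + B* z2^2 + C* z2 + D = 0"
    and h3: "z3^3 + B* z3^2 + C* z3 + D = 0"
  shows "B = -(z1+z2+z3) \<and> C = z1* z2+z1* z3+z2* z3 \<and> D = -(z1* z2* z3)"
proof -
  have "(z1 - z2) * (z1^2+z1* z2+z2^2 + B*(z1+z2) + C) = 0"
    using h1 h2 by algebra
  with d12 have g12: "z1^2+z1* z2+z2^2 + B*(z1+z2) + C = 0" by simp
  have "(z1 - z3) * (z1^2+z1* z3+z3^2 + B*(z1+z3) + C) = 0"
    using h1 h3 by algebra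
  with d13 have g13: "z1^2+z1* z3+z3^2 + B*(z1+z3) + C = 0" by simp
  have "(z2 - z3) * (z1+z2+z3+B) = 0" using g12 g13 by algebra
  with d23 have "z1+z2+z3+B = 0" by simp
  hence hB: "B = -(z1+z2+z3)" by algebra
  have hC: "C = z1* z2+z1* z3+z2* z3" using g12 hB by algebra
  have hD: "D = -(z1* z2* z3)" using h1 hB hC by algebra
  show ?thesis using hB hC hD by blast
qed

lemma pair_rel:
  fixes x y y' t sg :: complex
  assumes d: "y \<noteq> y'"
    and f1: "x^2 + y^2 - t*(x^2* y^2 + 1) - 2 * sg * x* y = 0"
    and f2: "x^2 + y'^2 - t*(x^2* y'^2 + 1) - 2 * sg * x* y' = 0"
  shows "(1 - t* x^2)*(y+y') = 2 * sg * x \<and> (1 - t* x^2)* y* y' = x^2 - t"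
proof -
  have "(y - y') * ((1 - t* x^2)*(y+y') - 2 * sg * x) = 0" using f1 f2 by algebra
  with d have A: "(1 - t* x^2)*(y+y') = 2 * sg * x" by simp
  have "(y - y') * ((1 - t* x^2)* y* y' - (x^2 - t)) = 0" using f1 f2 by algebra
  with d have B: "(1 - t* x^2)* y* y' = x^2 - t" by simp
  show ?thesis using A B by blast
qed

definition qf :: "real \<Rightarrow> real \<Rightarrow> pt \<Rightarrow> real" where
  "qf a b u = (fst u)^2/a^2 + (snd u)^2/b^2"

lemma norm_pt: "norm (u::pt) = sqrt ((fst u)^2 + (snd u)^2)"
  by (simp add: norm_Pair norm_prod_def)

lemma bisect:
  fixes a b :: real and P Q R :: pt
  assumes a: "a > 0" and b: "b > 0"
    and eP: "on_ellipse a b P" and eQ: "on_ellipse a b Q" and eR: "on_ellipse a b R"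
    and QP: "Q \<noteq> P" and RP: "R \<noteq> P" and nb: "normal_bisects a b P Q R"
  shows "qf a b (Q - P) * norm (R - P) = qf a b (R - P) * norm (Q - P)"
proof -
  obtain x y where P: "P = (x,y)" by (cases P)
  obtain x2 y2 where Q: "Q = (x2,y2)" by (cases Q)
  obtain x3 y3 where R: "R = (x3,y3)" by (cases R)
  define ux uy vx vy where "ux = x2 - x" "uy = y2 - y" "vx = x3 - x" "vy = y3 - y"
  define nu nv where "nu = norm (Q - P)" "nv = norm (R - P)"
  have nu2: "nu^2 = ux^2 + uy^2" unfolding nu_nv_def ux_uy_vx_vy_def P Q norm_pt by simp
  have nv2: "nv^2 = vx^2 + vy^2" unfolding nu_nv_def ux_uy_vx_vy_def P R norm_pt by simp
  have nupos: "nu > 0" unfolding nu_nv_def using QP by simp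
  have nvpos: "nv > 0" unfolding nu_nv_def using RP by simp
  define nx ny where "nx = x/a^2" "ny = y/b^2"
  have nu': "nu = norm (x2 - x, y2 - y)" "nv = norm (x3 - x, y3 - y)" unfolding nu_nv_def P Q R by simp_all
  have "(ux/nu + vx/nv)* ny - (uy/nu + vy/nv)* nx = 0"
    using nb unfolding normal_bisects_def cross2_def ell_normal_def nu' nx_ny_def
      ux_uy_vx_vy_def P Q R by simp
  moreover have "((ux/nu + vx/nv)* ny - (uy/nu + vy/nv)* nx) * (nu* nv) = (ux* ny - uy* nx)* nv + (vx* ny - vy* nx)* nu"
    using nupos nvpos by (simp add: field_simps)
  ultimately have eq1: "(ux* ny - uy* nx)* nv + (vx* ny - vy* nx)* nu = 0" by simp
  have L1: "(ux* ny - uy* nx)^2 + (ux* nx + uy* ny)^2 = nu^2*(nx^2+ny^2)" unfolding nu2 by algebra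
  have L2: "(vx* ny - vy* nx)^2 + (vx* nx + vy* ny)^2 = nv^2*(nx^2+ny^2)" unfolding nv2 by algebra
  have sq: "(ux* ny - uy* nx)^2* nv^2 = (vx* ny - vy* nx)^2* nu^2"
  proof -
    have "(ux* ny - uy* nx)* nv = -((vx* ny - vy* nx)* nu)" using eq1 by linarith
    hence "((ux* ny - uy* nx)* nv)^2 = ((vx* ny - vy* nx)* nu)^2" by simp
    thus ?thesis by (simp add: power_mult_distrib)
  qed
  have dd: "(ux* nx + uy* ny)^2* nv^2 = (vx* nx + vy* ny)^2* nu^2"
    using sq L1 L2 by algebra
  have e1: "x^2/a^2 + y^2/b^2 = 1" using eP P by (simp add: on_ellipse_def)
  have e2: "x2^2/a^2 + y2^2/b^2 = 1" using eQ Q by (simp add: on_ellipse_def)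
  have e3: "x3^2/a^2 + y3^2/b^2 = 1" using eR R by (simp add: on_ellipse_def)
  have du1: "ux* nx + uy* ny = (x2* x/a^2 + y2* y/b^2) - (x^2/a^2+y^2/b^2)"
    unfolding ux_uy_vx_vy_def nx_ny_def using a b by (simp add: field_simps power2_eq_square)
  have du2: "qf a b (Q-P) = (x2^2/a^2+y2^2/b^2) - 2*(x2* x/a^2 + y2* y/b^2) + (x^2/a^2+y^2/b^2)"
    unfolding qf_def P Q using a b by (simp add: field_simps power2_eq_square)
  have du: "ux* nx + uy* ny = - qf a b (Q-P) / 2" using du1 du2 e1 e2 by algebra
  have dv1: "vx* nx + vy* ny = (x3* x/a^2 + y3* y/b^2) - (x^2/a^2+y^2/b^2)"
    unfolding ux_uy_vx_vy_def nx_ny_def using a b by (simp add: field_simps power2_eq_square)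
  have dv2: "qf a b (R-P) = (x3^2/a^2+y3^2/b^2) - 2*(x3* x/a^2 + y3* y/b^2) + (x^2/a^2+y^2/b^2)"
    unfolding qf_def P R using a b by (simp add: field_simps power2_eq_square)
  have dv: "vx* nx + vy* ny = - qf a b (R-P) / 2" using dv1 dv2 e1 e3 by algebra
  have "(qf a b (Q-P) * nv)^2 = (qf a b (R-P) * nu)^2"
    using dd unfolding du dv by (simp add: power_mult_distrib power_divide)
  moreover have "qf a b (Q-P) * nv \<ge> 0" "qf a b (R-P) * nu \<ge> 0"
    unfolding qf_def using nupos nvpos by simp_all
  ultimately show ?thesis unfolding nu_nv_def by (simp add: power2_eq_iff_nonneg)
qed

lemma unit_cnj: "cmod z = 1 \<Longrightarrow> cnj z * z = 1"
  by (metis complex_norm_square mult.commute of_real_1 power_one)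

lemma re_cnj: "of_real (Re u) = (u + cnj u)/2"
  by (simp add: complex_add_cnj)

lemma im_sq_cnj: "of_real ((Im u)^2) = - ((u - cnj u)^2)/4"
proof -
  have "(u - cnj u)^2 = (complex_of_real (2 * Im u))^2 * \<i>^2" by (simp add: complex_diff_cnj power_mult_distrib)
  thus ?thesis by (simp add: power_mult_distrib)
qed

lemma chord_rel:
  fixes z w :: complex and a b J :: real
  assumes cz: "cmod z = 1" and cw: "cmod w = 1" and zw: "z \<noteq> w"
    and h: "(cmod (z - w))^2 = 2* J* sqrt((a*(Re z - Re w))^2 + (b*(Im z - Im w))^2)"
  shows "(z - w)^2 = of_real (J^2) * (of_real a^2*(z* w-1)^2 - of_real b^2*(z* w+1)^2)"
proof -
  define u where "u = z - w"
  define cu where "cu = cnj u"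
  have r4: "(cmod u)^4 = 4* J^2*((a* Re u)^2 + (b* Im u)^2)"
  proof -
    have "(cmod u)^4 = ((cmod u)^2)^2" by simp
    also have "\<dots> = (2* J)^2 * (sqrt((a* Re u)^2 + (b* Im u)^2))^2"
      using h unfolding u_def by (simp add: power_mult_distrib)
    also have "\<dots> = 4* J^2*((a* Re u)^2 + (b* Im u)^2)" by (simp add: power_mult_distrib)
    finally show ?thesis .
  qed
  have q1: "(cmod u)^4 = ((cmod u)^2)^2" by simp
  have "complex_of_real ((cmod u)^4) = (complex_of_real ((cmod u)^2))^2"
    unfolding q1 of_real_power ..
  hence l: "complex_of_real ((cmod u)^4) = (u* cu)^2"
    unfolding complex_norm_square cu_def .
  have uu: "(u * cu)^2 = complex_of_real (4 * J^2 * ((a * Re u)^2 + (b * Im u)^2))"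
    by (simp only: l[symmetric] r4)
  have "complex_of_real (4* J^2*((a* Re u)^2 + (b* Im u)^2)) =
     4* of_real (J^2) * (of_real a^2 * (of_real (Re u))^2 + of_real b^2 * of_real ((Im u)^2))"
    by (simp add: power_mult_distrib)
  also have "\<dots> = 4* of_real (J^2) * (of_real a^2 * ((u+cu)/2)^2 + of_real b^2 * (- ((u - cu)^2)/4))"
    unfolding re_cnj im_sq_cnj cu_def ..
  finally have eqR: "complex_of_real (4 * J^2 * ((a * Re u)^2 + (b * Im u)^2)) = 4* of_real (J^2) * (of_real a^2 * ((u+cu)/2)^2 + of_real b^2 * (- ((u - cu)^2)/4))" .
  have eqc: "(u* cu)^2 = 4* of_real (J^2) * (of_real a^2 * ((u+cu)/2)^2 + of_real b^2 * (- ((u - cu)^2)/4))"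
    using uu eqR by (rule trans)
  have cz': "cnj z * z = 1" using unit_cnj[OF cz] .
  have cw': "cnj w * w = 1" using unit_cnj[OF cw] .
  have cuzw: "cu * (z* w) = w - z"
  proof -
    have "cu * (z* w) = (cnj z * z) * w - (cnj w * w) * z" unfolding cu_def u_def by (simp add: algebra_simps)
    thus ?thesis using cz' cw' by simp
  qed
  define p where "p = z * w"
  have cup: "cu * p = - u" using cuzw unfolding p_def u_def by simp
  define K where "K = complex_of_real (J^2)"
  define A2 where "A2 = complex_of_real a ^ 2"
  define B2 where "B2 = complex_of_real b ^ 2"
  have eqc2: "(u* cu)^2 = K * (A2 * (u+cu)^2 - B2 * (u-cu)^2)"
  proof -
    have "4 * K * (A2 * ((u+cu)/2)^2 + B2 * (-((u-cu)^2)/4)) = K * (A2 * (u+cu)^2 - B2 * (u-cu)^2)"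
      by (simp add: field_simps)
    thus ?thesis using eqc unfolding K_def A2_def B2_def by simp
  qed
  have "(u* cu)^2 * p^2 = K * (A2 * (u* p+cu* p)^2 - B2 * (u* p-cu* p)^2)"
    unfolding eqc2 by (simp add: algebra_simps power2_eq_square)
  moreover have "(u* cu)^2 * p^2 = u^4"
  proof -
    have "(u* cu)^2 * p^2 = (u* (cu* p))^2" by (simp add: power_mult_distrib)
    thus ?thesis unfolding cup by (simp add: power2_eq_square power4_eq_xxxx)
  qed
  moreover have "u* p+cu* p = u* p - u" "u* p-cu* p = u* p+u" unfolding cup by simp_all
  ultimately have "u^4 = K * (A2 * (u* p-u)^2 - B2 * (u* p+u)^2)" by simp
  hence "u^2 * (u^2 - K * (A2*(p-1)^2 - B2*(p+1)^2)) = 0"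
    by algebra
  hence "u^2 * ((z-w)^2 - of_real (J^2) * (of_real a^2*(z* w-1)^2 - of_real b^2*(z* w+1)^2)) = 0"
    by (simp only: p_def u_def K_def A2_def B2_def)
  moreover have "u \<noteq> 0" using zw u_def by simp
  ultimately show ?thesis by simp
qed

definition toC :: "pt \<Rightarrow> complex" where "toC p = Complex (fst p) (snd p)"

lemma toC_add: "toC (p + q) = toC p + toC q" by (simp add: toC_def complex_eq_iff)
lemma toC_diff: "toC (p - q) = toC p - toC q" by (simp add: toC_def complex_eq_iff)
lemma toC_scaleR: "toC (x *\<^sub>R p) = of_real x * toC p" by (simp add: toC_def complex_eq_iff)
lemma toC_inj: "toC p = toC q \<longleftrightarrow> p = q" by (simp add: toC_def complex_eq_iff prod_eq_iff)
lemma norm_toC: "norm p = cmod (toC p)"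
  by (simp add: toC_def norm_Pair norm_prod_def cmod_def)
lemma dist_toC: "dist p q = cmod (toC p - toC q)"
  by (simp add: dist_norm norm_toC toC_diff)

lemma toC_invert:
  assumes "P \<noteq> Z"
  shows "toC (invert Z rho P) = toC Z + of_real (rho^2) / cnj (toC P - toC Z)"
proof -
  define q where "q = toC P - toC Z"
  have q0: "q \<noteq> 0" using assms toC_inj unfolding q_def by (metis eq_iff_diff_eq_0)
  have d: "dist P Z = cmod q" unfolding q_def dist_toC ..
  have "toC (invert Z rho P) = toC Z + of_real ((rho / cmod q)^2) * q"
    unfolding invert_def d toC_add toC_scaleR toC_diff q_def ..
  also have "of_real ((rho / cmod q)^2) * q = of_real (rho^2) / cnj q"
  proof -
    have "q * cnj q = of_real ((cmod q)^2)" by (rule complex_norm_square[symmetric])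
    moreover have "cnj q \<noteq> 0" using q0 by simp
    moreover have "cmod q \<noteq> 0" using q0 by simp
    ultimately show ?thesis by (simp add: field_simps power_divide)
  qed
  finally show ?thesis unfolding q_def .
qed

lemma dist_invert:
  assumes "P \<noteq> Z" "Q \<noteq> Z"
  shows "dist (invert Z rho P) (invert Z rho Q) = rho^2 * dist P Q / (dist P Z * dist Q Z)"
proof -
  define p q where "p = toC P - toC Z" "q = toC Q - toC Z"
  have p0: "p \<noteq> 0" using assms toC_inj unfolding p_q_def by (metis eq_iff_diff_eq_0)
  have q0: "q \<noteq> 0" using assms toC_inj unfolding p_q_def by (metis eq_iff_diff_eq_0)
  have "toC (invert Z rho P) - toC (invert Z rho Q) = of_real (rho^2) / cnj p - of_real (rho^2) / cnj q"
    unfolding toC_invert[OF assms(1)] toC_invert[OF assms(2)] p_q_def by simp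
  also have "\<dots> = of_real (rho^2) * cnj (q - p) / (cnj p * cnj q)"
    using p0 q0 by (simp add: field_simps)
  finally have e: "toC (invert Z rho P) - toC (invert Z rho Q) = of_real (rho^2) * cnj (q - p) / (cnj p * cnj q)" .
  have "q - p = toC Q - toC P" unfolding p_q_def by simp
  hence "cmod (q - p) = dist P Q" by (simp add: dist_toC norm_minus_commute)
  moreover have "cmod p = dist P Z" "cmod q = dist Q Z" unfolding p_q_def dist_toC by simp_all
  ultimately have f: "cmod (q - p) = dist P Q" "cmod p = dist P Z" "cmod q = dist Q Z" by blast+
  have "dist (invert Z rho P) (invert Z rho Q) = cmod (of_real (rho^2) * cnj (q - p) / (cnj p * cnj q))"
    by (simp only: dist_toC e)
  also have "\<dots> = rho^2 * cmod (q - p) / (cmod p * cmod q)"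
    by (simp add: norm_mult norm_divide norm_power complex_mod_cnj del: complex_cnj_diff)
  finally show ?thesis unfolding f .
qed

lemma mitt_scale:
  fixes A B C :: pt and mu l1 l2 l3 :: real
  assumes "dist B C = mu * l1" "dist C A = mu * l2" "dist A B = mu * l3" "mu \<noteq> 0"
    and W: "l1*(l2+l3-l1) + l2*(l3+l1-l2) + l3*(l1+l2-l3) \<noteq> 0"
  shows "toC (mittenpunkt A B C) =
     (of_real (l1*(l2+l3-l1)) * toC A + of_real (l2*(l3+l1-l2)) * toC B + of_real (l3*(l1+l2-l3)) * toC C)
      / of_real (l1*(l2+l3-l1) + l2*(l3+l1-l2) + l3*(l1+l2-l3))"
proof -
  have w: "dist B C * ((dist B C + dist C A + dist A B)/2 - dist B C) = mu^2/2 * (l1*(l2+l3-l1))"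
          "dist C A * ((dist B C + dist C A + dist A B)/2 - dist C A) = mu^2/2 * (l2*(l3+l1-l2))"
          "dist A B * ((dist B C + dist C A + dist A B)/2 - dist A B) = mu^2/2 * (l3*(l1+l2-l3))"
    unfolding assms(1-3) by (simp_all add: field_simps power2_eq_square)
  define k where "k = mu^2/2"
  have m0: "k \<noteq> 0" using assms(4) unfolding k_def by simp
  define W1 W2 W3 where "W1 = l1*(l2+l3-l1)" "W2 = l2*(l3+l1-l2)" "W3 = l3*(l1+l2-l3)"
  have W': "W1 + W2 + W3 \<noteq> 0" using W unfolding W1_W2_W3_def .
  have "mittenpunkt A B C = (1/(k* W1 + k* W2 + k* W3)) *\<^sub>R ((k* W1) *\<^sub>R A + (k* W2) *\<^sub>R B + (k* W3) *\<^sub>R C)"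
    unfolding mittenpunkt_def Let_def w k_def W1_W2_W3_def ..
  also have "\<dots> = (1/(W1+W2+W3)) *\<^sub>R (W1 *\<^sub>R A + W2 *\<^sub>R B + W3 *\<^sub>R C)"
  proof -
    have "k* W1 + k* W2 + k* W3 = k*(W1+W2+W3)" by (simp add: algebra_simps)
    moreover have "(k* W1) *\<^sub>R A + (k* W2) *\<^sub>R B + (k* W3) *\<^sub>R C = k *\<^sub>R (W1 *\<^sub>R A + W2 *\<^sub>R B + W3 *\<^sub>R C)"
      by (simp add: scaleR_add_right)
    ultimately show ?thesis using m0 by simp
  qed
  finally have "toC (mittenpunkt A B C) = of_real (1/(W1+W2+W3)) * (of_real W1 * toC A + of_real W2 * toC B + of_real W3 * toC C)"
    by (simp only: toC_add toC_scaleR)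
  thus ?thesis unfolding W1_W2_W3_def[symmetric] by (simp add: divide_inverse mult.commute)
qed

lemma ell_pt:
  assumes a: "a > 0" and b: "b > 0" and e: "on_ellipse a b P"
  shows "\<exists>z. cmod z = 1 \<and> P = (a * Re z, b * Im z)"
proof -
  define z where "z = Complex (fst P / a) (snd P / b)"
  have "(cmod z)^2 = 1" using e a b unfolding z_def on_ellipse_def cmod_power2
    by (simp add: power_divide)
  hence "cmod z = 1 \<or> cmod z = -1" by (simp add: power2_eq_1_iff)
  hence "cmod z = 1" using norm_ge_zero[of z] by linarith
  moreover have "P = (a * Re z, b * Im z)" unfolding z_def using a b by (simp add: prod_eq_iff)
  ultimately show ?thesis by blast
qed

lemma qf_z:
  assumes "a \<noteq> 0" "b \<noteq> 0"
  shows "qf a b ((a * Re w, b * Im w) - (a * Re z, b * Im z)) = (cmod (w - z))^2"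
  using assms unfolding qf_def cmod_power2 by (simp add: power_divide field_simps power2_eq_square)

lemma norm_z:
  "norm ((a * Re w, b * Im w) - (a * Re z, b * Im z)) = sqrt ((a*(Re w - Re z))^2 + (b*(Im w - Im z))^2)"
  unfolding norm_pt by (simp add: right_diff_distrib)

lemma focal:
  assumes ab: "a > b" and b: "b > 0" and c: "c = sqrt (a^2 - b^2)" and z: "cmod z = 1"
  shows "dist (a * Re z, b * Im z) (-c, 0) = a + c * Re z"
proof -
  have bb: "b^2 \<le> a^2" using ab b by (simp add: power_mono)
  hence c2: "c^2 = a^2 - b^2" using c by simp
  have c0: "c \<ge> 0" using c bb by simp
  have z2: "(Re z)^2 + (Im z)^2 = 1" using z by (metis cmod_power2 power_one)
  have ca: "c < a"
  proof -
    have "c^2 < a^2" using c2 b by simp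
    thus ?thesis using ab b by (intro power_less_imp_less_base[of c 2 a]) auto
  qed
  have re: "\<bar>Re z\<bar> \<le> 1" using z abs_Re_le_cmod by metis
  have pos: "a + c * Re z \<ge> 0"
  proof -
    have "-1 \<le> Re z" using re by linarith
    hence "c * (-1) \<le> c * Re z" using c0 by (rule mult_left_mono)
    hence "c * Re z \<ge> - c" by simp
    thus ?thesis using ca by linarith
  qed
  have "(dist (a * Re z, b * Im z) (-c, 0))^2 = (a * Re z + c)^2 + (b * Im z)^2"
    by (simp add: dist_norm norm_pt)
  also have "\<dots> = (a + c * Re z)^2"
  proof -
    have "(b * Im z)^2 = b^2 * (1 - (Re z)^2)" using z2 by (simp add: power_mult_distrib)
    thus ?thesis using c2 z2 by algebra
  qed
  finally have "(dist (a * Re z, b * Im z) (-c, 0))^2 = (a + c * Re z)^2" .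
  thus ?thesis using pos by (simp add: power2_eq_iff_nonneg)
qed

lemma cnj_focal:
  fixes z :: complex and a b c r :: real
  assumes z: "cmod z = 1" and rc: "r * c = a + b" and rab: "r * (a - b) = c"
  shows "cnj (toC (a * Re z, b * Im z) - toC (-c, 0)) * (2 * of_real r * z) = of_real c * (z + of_real r)^2"
proof -
  have cz: "cnj z * z = 1" using z by (metis complex_norm_square mult.commute of_real_1 power_one)
  have t: "toC (a * Re z, b * Im z) - toC (-c, 0) = of_real a * ((z + cnj z)/2) + of_real b * ((z - cnj z)/2) + of_real c"
    unfolding toC_def by (simp add: complex_eq_iff)
  have "cnj (toC (a * Re z, b * Im z) - toC (-c, 0)) = of_real a * ((cnj z + z)/2) + of_real b * ((cnj z - z)/2) + of_real c"
    unfolding t by simp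
  moreover have "complex_of_real r * (of_real a - of_real b) = of_real c" using rab by (metis of_real_diff of_real_mult)
  moreover have "complex_of_real r * of_real c = of_real a + of_real b" using rc by (metis of_real_add of_real_mult)
  ultimately show ?thesis using cz by algebra
qed

definition mi :: "complex \<Rightarrow> complex \<Rightarrow> complex \<Rightarrow> complex \<Rightarrow> complex" where
  "mi r x y z = (y - z)^2 * (r* x+1) * (x+r)"

definition MM :: "complex \<Rightarrow> complex \<Rightarrow> complex \<Rightarrow> complex \<Rightarrow> complex" where
  "MM r z1 z2 z3 = mi r z1 z2 z3 * (mi r z2 z3 z1 + mi r z3 z1 z2 - mi r z1 z2 z3)
     + mi r z2 z3 z1 * (mi r z3 z1 z2 + mi r z1 z2 z3 - mi r z2 z3 z1)
     + mi r z3 z1 z2 * (mi r z1 z2 z3 + mi r z2 z3 z1 - mi r z3 z1 z2)"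

definition AA :: "complex \<Rightarrow> complex \<Rightarrow> complex \<Rightarrow> complex \<Rightarrow> complex" where
  "AA r z1 z2 z3 = (z2-z3)^2*(r* z1+1)* z1*(mi r z2 z3 z1 + mi r z3 z1 z2 - mi r z1 z2 z3)*(z2+r)*(z3+r)
     + (z3-z1)^2*(r* z2+1)* z2*(mi r z3 z1 z2 + mi r z1 z2 z3 - mi r z2 z3 z1)*(z3+r)*(z1+r)
     + (z1-z2)^2*(r* z3+1)* z3*(mi r z1 z2 z3 + mi r z2 z3 z1 - mi r z3 z1 z2)*(z1+r)*(z2+r)"

lemma MM_sym: "MM r z1 z2 z3 = (let e1 = z1+z2+z3; e2 = z1* z2+z1* z3+z2* z3; e3 = z1* z2* z3 in (27 + (-(54* r^2)) + 27* r^4)* e3^2 + (4 + (-(8* r^2)) + 4* r^4)* e2^3 + ((-18) + 36* r^2 + (-(18* r^4)))* e1* e2* e3 + ((-1) + 2* r^2 + (-(r^4)))* e1^2* e2^2 + (4 + (-(8* r^2)) + 4* r^4)* e1^3* e3)"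
  unfolding MM_def mi_def Let_def by algebra

lemma AA_sym: "AA r z1 z2 z3 = (let e1 = z1+z2+z3; e2 = z1* z2+z1* z3+z2* z3; e3 = z1* z2* z3 in (81* r^2 + (-(27* r^4)))* e3^2 + ((-(27* r)) + 81* r^3)* e3^3 + (27* r^2 + 27* r^4)* e2* e3^2 + (12* r^2 + (-(4* r^4)))* e2^3 + ((-(4* r)) + 12* r^3)* e2^3* e3 + (4* r^2 + 4* r^4)* e2^4 + (27* r + 27* r^3)* e1* e3^2 + ((-(54* r^2)) + 18* r^4)* e1* e2* e3 + (18* r + (-(54* r^3)))* e1* e2* e3^2 + ((-(18* r^2)) + (-(18* r^4)))* e1* e2^2* e3 + (4* r + 4* r^3)* e1* e2^3 + ((-(18* r)) + (-(18* r^3)))* e1^2* e2* e3 + ((-(3* r^2)) + r^4)* e1^2* e2^2 + (r + (-(3* r^3)))* e1^2* e2^2* e3 + ((-(r^2)) + (-(r^4)))* e1^2* e2^3 + (12* r^2 + (-(4* r^4)))* e1^3* e3 + ((-(4* r)) + 12* r^3)* e1^3* e3^2 + (4* r^2 + 4* r^4)* e1^3* e2* e3 + ((-(r)) + (-(r^3)))* e1^3* e2^2 + (4* r + 4* r^3)* e1^4* e3)"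
  unfolding AA_def mi_def Let_def by algebra

lemma key_alg:
  fixes z1 z2 z3 r t w :: complex
  assumes e2: "z1* z2+z1* z3+z2* z3 = -t" and e1: "z1+z2+z3 = t* w" and e3: "z1* z2* z3 = -w"
    and rel: "r^2* t^2+(r^4+1)* t-3* r^2 = 0"
  shows "(r^2+1)*((r^2-1)^2* AA r z1 z2 z3 + r*(r+z1)*(r+z2)*(r+z3)* MM r z1 z2 z3)
          + (3-t)* r^2* MM r z1 z2 z3*(r^3* w+t* r^2-t* r* w-1) = 0"
proof -
  have pi: "r*(r+z1)*(r+z2)*(r+z3) = r*(r^3 + (z1+z2+z3)* r^2 + (z1* z2+z1* z3+z2* z3)* r + z1* z2* z3)"
    by algebra
  have "(r^2+1)*((r^2-1)^2* AA r z1 z2 z3 + r*(r+z1)*(r+z2)*(r+z3)* MM r z1 z2 z3)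
          + (3-t)* r^2* MM r z1 z2 z3*(r^3* w+t* r^2-t* r* w-1) = 4* r^2* t^4 + (-(12* r^4* t^3)) + (-(8* r^4* t^4)) + 4* r^4* t^5 + 24* r^6* t^3 + 8* r^6* t^4 + (-(8* r^6* t^5)) + (-(12* r^8* t^3)) + (-(8* r^8* t^4)) + 4* r^8* t^5 + 4* r^10* t^4 + (-(4* w* r* t^4)) + 12* w* r^3* t^3 + 8* w* r^3* t^4 + (-(4* w* r^3* t^5)) + (-(24* w* r^5* t^3)) + (-(8* w* r^5* t^4)) + 8* w* r^5* t^5 + 12* w* r^7* t^3 + 8* w* r^7* t^4 + (-(4* w* r^7* t^5)) + (-(4* w* r^9* t^4)) + (-(27* w^2* r^2* t)) + 18* w^2* r^2* t^3 + w^2* r^2* t^5 + 81* w^2* r^4 + 54* w^2* r^4* t + (-(81* w^2* r^4* t^2)) + (-(36* w^2* r^4* t^3)) + 15* w^2* r^4* t^4 + (-(2* w^2* r^4* t^5)) + w^2* r^4* t^6 + (-(162* w^2* r^6)) + (-(54* w^2* r^6* t)) + 162* w^2* r^6* t^2 + 36* w^2* r^6* t^3 + (-(30* w^2* r^6* t^4)) + 2* w^2* r^6* t^5 + (-(2* w^2* r^6* t^6)) + 81* w^2* r^8 + 54* w^2* r^8* t + (-(81* w^2* r^8* t^2)) + (-(36* w^2* r^8* t^3)) + 15* w^2* r^8* t^4 + (-(2* w^2* r^8* t^5)) + w^2* r^8* t^6 + (-(27* w^2* r^10* t)) + 18* w^2* r^10* t^3 + w^2* r^10* t^5 + 27* w^3*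 r* t + (-(18* w^3* r* t^3)) + (-(w^3* r* t^5)) + (-(81* w^3* r^3)) + (-(54* w^3* r^3* t)) + 81* w^3* r^3* t^2 + 36* w^3* r^3* t^3 + (-(15* w^3* r^3* t^4)) + 2* w^3* r^3* t^5 + (-(w^3* r^3* t^6)) + 162* w^3* r^5 + 54* w^3* r^5* t + (-(162* w^3* r^5* t^2)) + (-(36* w^3* r^5* t^3)) + 30* w^3* r^5* t^4 + (-(2* w^3* r^5* t^5)) + 2* w^3* r^5* t^6 + (-(81* w^3* r^7)) + (-(54* w^3* r^7* t)) + 81* w^3* r^7* t^2 + 36* w^3* r^7* t^3 + (-(15* w^3* r^7* t^4)) + 2* w^3* r^7* t^5 + (-(w^3* r^7* t^6)) + 27* w^3* r^9* t + (-(18* w^3* r^9* t^3)) + (-(w^3* r^9* t^5)) + 4* w^4* r^2* t^4 + (-(12* w^4* r^4* t^3)) + (-(8* w^4* r^4* t^4)) + 4* w^4* r^4* t^5 + 24* w^4* r^6* t^3 + 8* w^4* r^6* t^4 + (-(8* w^4* r^6* t^5)) + (-(12* w^4* r^8* t^3)) + (-(8* w^4* r^8* t^4)) + 4* w^4* r^8* t^5 + 4* w^4* r^10* t^4 + (-(4* w^5* r* t^4)) + 12* w^5* r^3* t^3 + 8* w^5* r^3* t^4 + (-(4* w^5* r^3* t^5)) + (-(24* w^5* r^5* t^3)) + (-(8* w^5* r^5* t^4)) + 8* w^5* r^5* t^5 + 12* w^5* r^7* t^3 + 8* w^5* r^7* t^4 + (-(4* w^5* r^7* t^5)) + (-(4*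 w^5* r^9* t^4))"
    unfolding pi MM_sym AA_sym Let_def e1 e2 e3 by algebra
  also have "... = (4* r^2* t^3 + (-(8* r^4* t^3)) + 4* r^6* t^3 + (-(4* w* r* t^3)) + 8* w* r^3* t^3 + (-(4* w* r^5* t^3)) + (-(27* w^2* r^2)) + 18* w^2* r^2* t^2 + w^2* r^2* t^4 + 54* w^2* r^4 + (-(36* w^2* r^4* t^2)) + (-(2* w^2* r^4* t^4)) + (-(27* w^2* r^6)) + 18* w^2* r^6* t^2 + w^2* r^6* t^4 + 27* w^3* r + (-(18* w^3* r* t^2)) + (-(w^3* r* t^4)) + (-(54* w^3* r^3)) + 36* w^3* r^3* t^2 + 2* w^3* r^3* t^4 + 27* w^3* r^5 + (-(18* w^3* r^5* t^2)) + (-(w^3* r^5* t^4)) + 4* w^4* r^2* t^3 + (-(8* w^4* r^4* t^3)) + 4* w^4* r^6* t^3 + (-(4* w^5* r* t^3)) + 8* w^5* r^3* t^3 + (-(4* w^5* r^5* t^3))) * (r^2* t^2+(r^4+1)* t-3* r^2)" by algebra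
  finally have "(r^2+1)*((r^2-1)^2* AA r z1 z2 z3 + r*(r+z1)*(r+z2)*(r+z3)* MM r z1 z2 z3)
          + (3-t)* r^2* MM r z1 z2 z3*(r^3* w+t* r^2-t* r* w-1) = (4* r^2* t^3 + (-(8* r^4* t^3)) + 4* r^6* t^3 + (-(4* w* r* t^3)) + 8* w* r^3* t^3 + (-(4* w* r^5* t^3)) + (-(27* w^2* r^2)) + 18* w^2* r^2* t^2 + w^2* r^2* t^4 + 54* w^2* r^4 + (-(36* w^2* r^4* t^2)) + (-(2* w^2* r^4* t^4)) + (-(27* w^2* r^6)) + 18* w^2* r^6* t^2 + w^2* r^6* t^4 + 27* w^3* r + (-(18* w^3* r* t^2)) + (-(w^3* r* t^4)) + (-(54* w^3* r^3)) + 36* w^3* r^3* t^2 + 2* w^3* r^3* t^4 + 27* w^3* r^5 + (-(18* w^3* r^5* t^2)) + (-(w^3* r^5* t^4)) + 4* w^4* r^2* t^3 + (-(8* w^4* r^4* t^3)) + 4* w^4* r^6* t^3 + (-(4* w^5* r* t^3)) + 8* w^5* r^3* t^3 + (-(4* w^5* r^5* t^3))) * (r^2* t^2+(r^4+1)* t-3* r^2)" .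
  with rel show ?thesis by simp
qed

lemma MM_disc: "MM r z1 z2 z3 = - ((r^2-1)^2 * ((z1-z2)*(z1-z3)*(z2-z3))^2)"
  unfolding MM_def mi_def by algebra

lemma canc: fixes K q q2 q3 z :: complex
  assumes "q \<noteq> 0" "q2 \<noteq> 0" "q3 \<noteq> 0"
  shows "K * q * (z/q^2) = K * z * q2 * q3 / (q * q2 * q3)"
  using assms by (simp add: field_simps power2_eq_square)

lemma sumW:
  fixes r z1 z2 z3 :: complex
  assumes n1: "z1 + r \<noteq> 0" and n2: "z2 + r \<noteq> 0" and n3: "z3 + r \<noteq> 0" and nr: "r^2 - 1 \<noteq> 0"
  shows "mi r z1 z2 z3 * (mi r z2 z3 z1 + mi r z3 z1 z2 - mi r z1 z2 z3) * (z1/(z1+r)^2 + r/(r^2-1)^2)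
       + mi r z2 z3 z1 * (mi r z3 z1 z2 + mi r z1 z2 z3 - mi r z2 z3 z1) * (z2/(z2+r)^2 + r/(r^2-1)^2)
       + mi r z3 z1 z2 * (mi r z1 z2 z3 + mi r z2 z3 z1 - mi r z3 z1 z2) * (z3/(z3+r)^2 + r/(r^2-1)^2)
     = ((r^2-1)^2 * AA r z1 z2 z3 + r*(r+z1)*(r+z2)*(r+z3)* MM r z1 z2 z3) / ((r^2-1)^2 * ((r+z1)*(r+z2)*(r+z3)))"
proof -
  define X1 X2 X3 where "X1 = mi r z2 z3 z1 + mi r z3 z1 z2 - mi r z1 z2 z3"
    "X2 = mi r z3 z1 z2 + mi r z1 z2 z3 - mi r z2 z3 z1" "X3 = mi r z1 z2 z3 + mi r z2 z3 z1 - mi r z3 z1 z2"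
  define Pi where "Pi = (z1+r)*(z2+r)*(z3+r)"
  have Pi0: "Pi \<noteq> 0" using n1 n2 n3 unfolding Pi_def by simp
  have t1: "mi r z1 z2 z3 * X1 * (z1/(z1+r)^2) = (z2-z3)^2*(r* z1+1)* z1* X1*(z2+r)*(z3+r) / Pi"
    unfolding mi_def Pi_def using canc[OF n1 n2 n3, of "(z2-z3)^2*(r* z1+1)* X1" z1] by (simp add: ac_simps)
  have t2: "mi r z2 z3 z1 * X2 * (z2/(z2+r)^2) = (z3-z1)^2*(r* z2+1)* z2* X2*(z3+r)*(z1+r) / Pi"
    unfolding mi_def Pi_def using canc[OF n2 n3 n1, of "(z3-z1)^2*(r* z2+1)* X2" z2] by (simp add: ac_simps)
  have t3: "mi r z3 z1 z2 * X3 * (z3/(z3+r)^2) = (z1-z2)^2*(r* z3+1)* z3* X3*(z1+r)*(z2+r) / Pi"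
    unfolding mi_def Pi_def using canc[OF n3 n1 n2, of "(z1-z2)^2*(r* z3+1)* X3" z3] by (simp add: ac_simps)
  have AAe: "AA r z1 z2 z3 = (z2-z3)^2*(r* z1+1)* z1* X1*(z2+r)*(z3+r) + (z3-z1)^2*(r* z2+1)* z2* X2*(z3+r)*(z1+r)
     + (z1-z2)^2*(r* z3+1)* z3* X3*(z1+r)*(z2+r)" unfolding AA_def X1_X2_X3_def ..
  have MMe: "MM r z1 z2 z3 = mi r z1 z2 z3 * X1 + mi r z2 z3 z1 * X2 + mi r z3 z1 z2 * X3"
    unfolding MM_def X1_X2_X3_def ..
  have "mi r z1 z2 z3 * X1 * (z1/(z1+r)^2 + r/(r^2-1)^2) + mi r z2 z3 z1 * X2 * (z2/(z2+r)^2 + r/(r^2-1)^2)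
       + mi r z3 z1 z2 * X3 * (z3/(z3+r)^2 + r/(r^2-1)^2)
      = (mi r z1 z2 z3 * X1 * (z1/(z1+r)^2) + mi r z2 z3 z1 * X2 * (z2/(z2+r)^2) + mi r z3 z1 z2 * X3 * (z3/(z3+r)^2))
        + MM r z1 z2 z3 * (r/(r^2-1)^2)"
    unfolding MMe by (simp add: algebra_simps)
  also have "\<dots> = AA r z1 z2 z3 / Pi + MM r z1 z2 z3 * (r/(r^2-1)^2)"
    unfolding t1 t2 t3 AAe by (simp add: add_divide_distrib)
  also have "\<dots> = ((r^2-1)^2 * AA r z1 z2 z3 + r * Pi * MM r z1 z2 z3) / ((r^2-1)^2 * Pi)"
    using Pi0 nr by (simp add: field_simps)
  also have "Pi = (r+z1)*(r+z2)*(r+z3)" unfolding Pi_def by (simp add: add.commute)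
  finally show ?thesis unfolding X1_X2_X3_def by (simp add: mult.assoc)
qed

lemma ell_c:
  fixes x y y' :: complex and a c r :: real
  assumes x: "cmod x = 1" and y: "cmod y = 1" and y': "cmod y' = 1" and ar: "2* a* r = c*(r^2+1)"
  shows "of_real ((cmod (y - y'))^2 * (a + c * Re x)) * (2 * of_real r * (x* y* y'))
       = - of_real c * ((y - y')^2 * (of_real r * x + 1) * (x + of_real r))"
proof -
  have cx: "cnj x * x = 1" using x by (metis complex_norm_square mult.commute of_real_1 power_one)
  have cy: "cnj y * y = 1" using y by (metis complex_norm_square mult.commute of_real_1 power_one)
  have cy': "cnj y' * y' = 1" using y' by (metis complex_norm_square mult.commute of_real_1 power_one)
  have n: "complex_of_real ((cmod (y - y'))^2) = (y - y') * cnj (y - y')" by (rule complex_norm_square)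
  have rx: "complex_of_real (Re x) = (x + cnj x)/2" by (simp add: complex_add_cnj)
  have "complex_of_real ((cmod (y - y'))^2 * (a + c * Re x)) = complex_of_real ((cmod (y - y'))^2) * (of_real a + of_real c * of_real (Re x))"
    by (simp only: of_real_mult of_real_add)
  hence "of_real ((cmod (y - y'))^2 * (a + c * Re x)) = (y - y') * (cnj y - cnj y') * (of_real a + of_real c * ((x + cnj x)/2))"
    unfolding n rx by simp
  moreover have "2 * complex_of_real a * of_real r = of_real c * ((of_real r)^2 + 1)"
    using ar by (metis of_real_add of_real_mult of_real_power of_real_1 of_real_numeral)
  ultimately show ?thesis using cx cy cy' by algebra
qed

lemma wavg:
  fixes A1 A2 A3 Wc V1 V2 V3 C :: complex
  assumes "A1 + A2 + A3 = Wc" "Wc \<noteq> 0"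
  shows "(A1 * V1 + A2 * V2 + A3 * V3) / Wc - C = (A1 * (V1 - C) + A2 * (V2 - C) + A3 * (V3 - C)) / Wc"
proof -
  have "(A1 * (V1 - C) + A2 * (V2 - C) + A3 * (V3 - C)) = (A1 * V1 + A2 * V2 + A3 * V3) - (A1 + A2 + A3) * C"
    by (simp add: algebra_simps)
  thus ?thesis using assms by (simp add: diff_divide_distrib)
qed

lemma canc2:
  fixes A X M P B C Q :: complex
  assumes "M \<noteq> 0" "B \<noteq> 0" "C \<noteq> 0" "Q \<noteq> 0"
  shows "A * (-(X*M*P)/B)/(C*Q*M) = -(A*X/(B*C))*P/Q"
  using assms by (simp add: field_simps)

theorem mainTheorem2:
  fixes a b rho :: real
  assumes "a > b" "b > 0" "rho > 0"
  defines "c \<equiv> sqrt (a^2 - b^2)"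
      and "\<delta> \<equiv> sqrt (a^4 - a^2 * b^2 + b^4)"
  defines "f1 \<equiv> (- c, 0::real)"
  defines "C9 \<equiv> (- c * (1 + rho^2 / (2 * b^2)), 0::real)"
      and "R9 \<equiv> rho^2 * (2 * a^2 - b^2 - \<delta>) / (2 * a * b^2)"
  shows "(\<forall>P1 P2 P3. three_periodic a b P1 P2 P3 \<longrightarrow>
            dist (mittenpunkt (invert f1 rho P1) (invert f1 rho P2) (invert f1 rho P3)) C9 = R9)
         \<and> invert f1 rho C9 = (- (a^2 + b^2) / c, 0)"
proof -
  have ab: "a > b" and b0: "b > 0" and rho0: "rho > 0" using assms by auto
  have a0: "a > 0" using ab b0 by linarith
  have bb: "b^2 < a^2" using ab b0 by (simp add: power_strict_mono)
  have c2: "c^2 = a^2 - b^2" unfolding c_def using bb by simp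
  have c0: "c > 0" unfolding c_def using bb by simp
  define r where "r = (a+b)/c"
  have rc: "r * c = a + b" unfolding r_def using c0 by simp
  have rab: "r * (a - b) = c"
  proof -
    have "r * (a - b) * c = c * c" using rc c2 by (simp add: power2_eq_square algebra_simps)
    thus ?thesis using c0 by simp
  qed
  have ar: "2 * a * r = c * (r^2 + 1)"
  proof -
    have "(2 * a * r) * c = (c * (r^2 + 1)) * c"
      using rc c2 by algebra
    thus ?thesis using c0 by simp
  qed
  have br: "2 * b * r = c * (r^2 - 1)"
  proof -
    have "(2 * b * r) * c = (c * (r^2 - 1)) * c"
      using rc c2 by algebra
    thus ?thesis using c0 by simp
  qed
  have r1: "r > 1"
  proof -
    have "c^2 < (a + b)^2"
    proof -
      have "(a+b)^2 - c^2 = 2* b*(a+b)" using c2 by (simp add: power2_eq_square algebra_simps)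
      moreover have "2* b*(a+b) > 0" using a0 b0 by simp
      ultimately show ?thesis by linarith
    qed
    hence "c < a + b" using a0 b0 by (intro power_less_imp_less_base[of c 2 "a+b"]) auto
    thus ?thesis unfolding r_def using c0 by simp
  qed
  have part2: "invert f1 rho C9 = (- (a^2 + b^2) / c, 0)"
  proof -
    have e9: "C9 - f1 = (- (c * rho^2 / (2 * b^2)), 0)" unfolding C9_def f1_def by (simp add: algebra_simps)
    have "dist C9 f1 = sqrt ((c * rho^2 / (2 * b^2))^2)" unfolding dist_norm e9 norm_pt by simp
    also have "\<dots> = c * rho^2 / (2 * b^2)" using c0 b0 by simp
    finally have d9: "dist C9 f1 = c * rho^2 / (2 * b^2)" .
    have "invert f1 rho C9 = f1 + (rho / (c * rho^2 / (2 * b^2)))^2 *\<^sub>R (C9 - f1)"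
      unfolding invert_def d9 ..
    also have "\<dots> = (- (a^2 + b^2) / c, 0)"
      unfolding C9_def f1_def using c0 b0 rho0 c2 by (simp add: field_simps power2_eq_square)
    finally show ?thesis .
  qed
  have ca: "c < a"
  proof -
    have "c^2 < a^2" using c2 b0 by simp
    thus ?thesis using a0 by (intro power_less_imp_less_base[of c 2 a]) auto
  qed
  have part1: "\<forall>P1 P2 P3. three_periodic a b P1 P2 P3 \<longrightarrow>
            dist (mittenpunkt (invert f1 rho P1) (invert f1 rho P2) (invert f1 rho P3)) C9 = R9"
  proof (intro allI impI)
    fix P1 P2 P3 assume tp: "three_periodic a b P1 P2 P3"
    have e1: "on_ellipse a b P1" and e2: "on_ellipse a b P2" and e3: "on_ellipse a b P3"
      and p12: "P1 \<noteq> P2" and p23: "P2 \<noteq> P3" and p13: "P1 \<noteq> P3"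
      and nb1: "normal_bisects a b P1 P2 P3" and nb2: "normal_bisects a b P2 P3 P1"
      using tp unfolding three_periodic_def by auto
    obtain z1 where z1: "cmod z1 = 1" and P1: "P1 = (a * Re z1, b * Im z1)" using ell_pt[OF a0 b0 e1] by blast
    obtain z2 where z2: "cmod z2 = 1" and P2: "P2 = (a * Re z2, b * Im z2)" using ell_pt[OF a0 b0 e2] by blast
    obtain z3 where z3: "cmod z3 = 1" and P3: "P3 = (a * Re z3, b * Im z3)" using ell_pt[OF a0 b0 e3] by blast
    have z12: "z1 \<noteq> z2" using p12 P1 P2 by auto
    have z13: "z1 \<noteq> z3" using p13 P1 P3 by auto
    have z23: "z2 \<noteq> z3" using p23 P2 P3 by auto
    have B1: "qf a b (P2 - P1) * norm (P3 - P1) = qf a b (P3 - P1) * norm (P2 - P1)"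
      using bisect[OF a0 b0 e1 e2 e3 p12[symmetric] p13[symmetric] nb1] .
    have B2: "qf a b (P3 - P2) * norm (P1 - P2) = qf a b (P1 - P2) * norm (P3 - P2)"
      using bisect[OF a0 b0 e2 e3 e1 p23[symmetric] p12 nb2] .
    define Q12 Q13 Q23 where "Q12 = (cmod (z1 - z2))^2" "Q13 = (cmod (z1 - z3))^2" "Q23 = (cmod (z2 - z3))^2"
    define N12 N13 N23 where "N12 = norm (P1 - P2)" "N13 = norm (P1 - P3)" "N23 = norm (P2 - P3)"
    have a0': "a \<noteq> 0" and b0': "b \<noteq> 0" using a0 b0 by auto
    have q21: "qf a b (P2 - P1) = Q12" unfolding Q12_Q13_Q23_def P1 P2 qf_z[OF a0' b0'] by (simp add: norm_minus_commute)
    have q31: "qf a b (P3 - P1) = Q13" unfolding Q12_Q13_Q23_def P1 P3 qf_z[OF a0' b0'] by (simp add: norm_minus_commute)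
    have q32: "qf a b (P3 - P2) = Q23" unfolding Q12_Q13_Q23_def P2 P3 qf_z[OF a0' b0'] by (simp add: norm_minus_commute)
    have q12: "qf a b (P1 - P2) = Q12" unfolding Q12_Q13_Q23_def P1 P2 qf_z[OF a0' b0'] ..
    have n31: "norm (P3 - P1) = N13" "norm (P2 - P1) = N12" "norm (P3 - P2) = N23"
      unfolding N12_N13_N23_def by (simp_all add: norm_minus_commute)
    have B1': "Q12 * N13 = Q13 * N12" using B1 unfolding q21 q31 n31 .
    have B2': "Q23 * N12 = Q12 * N23" using B2 unfolding q32 q12 n31 N12_N13_N23_def[symmetric] .
    have N12p: "N12 > 0" unfolding N12_N13_N23_def using p12 by simp
    have Q12p: "Q12 > 0" unfolding Q12_Q13_Q23_def using z12 by simp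
    define J where "J = Q12 / (2 * N12)"
    have J0: "J > 0" unfolding J_def using N12p Q12p by simp
    have hQ12: "Q12 = 2 * J * N12" unfolding J_def using N12p by simp
    have hQ13: "Q13 = 2 * J * N13"
    proof -
      have "Q13 * N12 = (2 * J * N13) * N12" using B1' hQ12 by algebra
      thus ?thesis using N12p by simp
    qed
    have hQ23: "Q23 = 2 * J * N23"
    proof -
      have "Q23 * N12 = (2 * J * N23) * N12" using B2' hQ12 by algebra
      thus ?thesis using N12p by simp
    qed
    have nz12: "N12 = sqrt ((a*(Re z1 - Re z2))^2 + (b*(Im z1 - Im z2))^2)" unfolding N12_N13_N23_def P1 P2 norm_z ..
    have nz13: "N13 = sqrt ((a*(Re z1 - Re z3))^2 + (b*(Im z1 - Im z3))^2)" unfolding N12_N13_N23_def P1 P3 norm_z ..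
    have nz23: "N23 = sqrt ((a*(Re z2 - Re z3))^2 + (b*(Im z2 - Im z3))^2)" unfolding N12_N13_N23_def P2 P3 norm_z ..
    define K where "K = complex_of_real (J^2)"
    have rel12: "(z1 - z2)^2 = K * (of_real a^2*(z1* z2-1)^2 - of_real b^2*(z1* z2+1)^2)"
      unfolding K_def by (rule chord_rel[OF z1 z2 z12]) (use hQ12 nz12 Q12_Q13_Q23_def in simp)
    have rel13: "(z1 - z3)^2 = K * (of_real a^2*(z1* z3-1)^2 - of_real b^2*(z1* z3+1)^2)"
      unfolding K_def by (rule chord_rel[OF z1 z3 z13]) (use hQ13 nz13 Q12_Q13_Q23_def in simp)
    have rel23: "(z2 - z3)^2 = K * (of_real a^2*(z2* z3-1)^2 - of_real b^2*(z2* z3+1)^2)"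
      unfolding K_def by (rule chord_rel[OF z2 z3 z23]) (use hQ23 nz23 Q12_Q13_Q23_def in simp)
    define tR where "tR = J^2 * c^2"
    define sR where "sR = 1 - J^2 * (a^2 + b^2)"
    define t where "t = complex_of_real tR"
    define sg where "sg = complex_of_real sR"
    have c2C: "(complex_of_real c)^2 = (of_real a)^2 - (of_real b)^2"
      using c2 by (metis of_real_diff of_real_power)
    have tC: "t = K * ((of_real a)^2 - (of_real b)^2)" unfolding t_def tR_def K_def c2C[symmetric] by simp
    have sC: "sg = 1 - K * ((of_real a)^2 + (of_real b)^2)" unfolding sg_def sR_def K_def by simp
    have conv: "x^2 + y^2 - t*(x^2* y^2 + 1) - 2 * sg * x * y = 0 \<and> y^2 + x^2 - t*(y^2* x^2 + 1) - 2 * sg * y * x = 0"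
      if "(x - y)^2 = K * (of_real a^2*(x* y-1)^2 - of_real b^2*(x* y+1)^2)" for x y
    proof -
      have q: "x^2 + y^2 - t*(x^2* y^2 + 1) - 2 * sg * x * y = 0"
        using that unfolding tC sC by algebra
      moreover have "y^2 + x^2 - t*(y^2* x^2 + 1) - 2 * sg * y * x = x^2 + y^2 - t*(x^2* y^2 + 1) - 2 * sg * x * y"
        by (simp add: algebra_simps)
      ultimately show ?thesis by simp
    qed
    note f12 = conv[OF rel12] and f13 = conv[OF rel13] and f23 = conv[OF rel23]
    have pr1: "(1 - t* z1^2)*(z2+z3) = 2 * sg * z1 \<and> (1 - t* z1^2)* z2* z3 = z1^2 - t"
      by (rule pair_rel[OF z23]) (use f12 f13 in auto)
    have pr2: "(1 - t* z2^2)*(z3+z1) = 2 * sg * z2 \<and> (1 - t* z2^2)* z3* z1 = z2^2 - t"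
      by (rule pair_rel[OF z13[symmetric]]) (use f23 f12 in auto)
    have pr3: "(1 - t* z3^2)*(z1+z2) = 2 * sg * z3 \<and> (1 - t* z3^2)* z1* z2 = z3^2 - t"
      by (rule pair_rel[OF z12]) (use f13 f23 in auto)
    define e1 e2 e3 where "e1 = z1+z2+z3" "e2 = z1* z2+z1* z3+z2* z3" "e3 = z1* z2* z3"
    have h1: "z1^3 + (t* e3)* z1^2 + (-t)* z1 + (-e3) = 0" using pr1[THEN conjunct2] unfolding e1_e2_e3_def by algebra
    have h2: "z2^3 + (t* e3)* z2^2 + (-t)* z2 + (-e3) = 0" using pr2[THEN conjunct2] unfolding e1_e2_e3_def by algebra
    have h3: "z3^3 + (t* e3)* z3^2 + (-t)* z3 + (-e3) = 0" using pr3[THEN conjunct2] unfolding e1_e2_e3_def by algebra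
    have V2: "t* e3 = -e1 \<and> -t = e2"
      using cubic_vieta[OF z12 z13 z23 h1 h2 h3] unfolding e1_e2_e3_def by simp
    have tR0: "tR > 0" unfolding tR_def using J0 c0 by simp
    have t0: "t \<noteq> 0" unfolding t_def using tR0 by simp
    have g: "z^3 + (-e1)* z^2 + (-(1 + 2 * sg)/t)* z + e1/t = 0"
      if "(1 - t* z^2)*(e1 - z) = 2 * sg * z" for z
    proof -
      have "t * (z^3 + (-e1)* z^2 + (-(1 + 2 * sg)/t)* z + e1/t) = t* z^3 - t* e1* z^2 - (1 + 2 * sg)* z + e1"
        using t0 by (simp add: field_simps)
      also have "\<dots> = 0" using that by algebra
      finally show ?thesis using t0 by simp
    qed
    have g1: "z1^3 + (-e1)* z1^2 + (-(1 + 2 * sg)/t)* z1 + e1/t = 0"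
      by (rule g) (use pr1 in \<open>simp add: e1_e2_e3_def add.assoc\<close>)
    have g2: "z2^3 + (-e1)* z2^2 + (-(1 + 2 * sg)/t)* z2 + e1/t = 0"
      by (rule g) (use pr2 in \<open>simp add: e1_e2_e3_def add.commute add.left_commute\<close>)
    have g3: "z3^3 + (-e1)* z3^2 + (-(1 + 2 * sg)/t)* z3 + e1/t = 0"
      by (rule g) (use pr3 in \<open>simp add: e1_e2_e3_def\<close>)
    have V1: "-(1 + 2 * sg)/t = e2"
      using cubic_vieta[OF z12 z13 z23 g1 g2 g3] unfolding e1_e2_e3_def by simp
    have "t^2 = 1 + 2 * sg"
    proof -
      have "-(1 + 2 * sg)/t = -t" using V1 V2 by simp
      thus ?thesis using t0 by (simp add: field_simps power2_eq_square)
    qed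
    hence "complex_of_real (tR^2) = complex_of_real (1 + 2 * sR)" unfolding t_def sg_def by simp
    hence cay: "tR^2 = 1 + 2 * sR" by (simp only: of_real_eq_iff)
    have relR: "r^2 * tR^2 + (r^4+1) * tR - 3 * r^2 = 0"
    proof -
      have "2 * r^2 * (a^2 + b^2) = c^2 * (r^4 + 1)" using ar br by algebra
      thus ?thesis using cay unfolding sR_def tR_def by algebra
    qed
    define w where "w = - e3"
    have cw: "cmod w = 1" unfolding w_def e1_e2_e3_def using z1 z2 z3 by (simp add: norm_mult)
    have E1: "z1+z2+z3 = t * w" using V2[THEN conjunct1] unfolding w_def e1_e2_e3_def by algebra
    have E2: "z1* z2+z1* z3+z2* z3 = - t" using V2 unfolding e1_e2_e3_def by simp
    have E3: "z1* z2* z3 = - w" unfolding w_def e1_e2_e3_def by simp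
    define rr where "rr = complex_of_real r"
    have relC: "rr^2* t^2+(rr^4+1)* t-3* rr^2 = 0"
    proof -
      have "complex_of_real (r^2 * tR^2 + (r^4+1) * tR - 3 * r^2) = 0" using relR by simp
      thus ?thesis unfolding rr_def t_def by simp
    qed
    have key: "(rr^2+1)*((rr^2-1)^2* AA rr z1 z2 z3 + rr*(rr+z1)*(rr+z2)*(rr+z3)* MM rr z1 z2 z3)
          + (3-t)* rr^2* MM rr z1 z2 z3*(rr^3* w+t* rr^2-t* rr* w-1) = 0"
      by (rule key_alg[OF E2 E1 E3 relC])
    have cc: "c = sqrt (a^2 - b^2)" by (simp add: c_def)
    have c0': "complex_of_real c \<noteq> 0" using c0 by simp
    have dpos: "a + c * Re z > 0" if "cmod z = 1" for z
    proof -
      have "\<bar>Re z\<bar> \<le> 1" using that abs_Re_le_cmod by metis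
      hence "-1 \<le> Re z" by linarith
      hence "c * (-1) \<le> c * Re z" using c0 by (intro mult_left_mono) auto
      thus ?thesis using ca by linarith
    qed
    have ne: "(a * Re z, b * Im z) \<noteq> f1" if "cmod z = 1" for z
    proof
      assume "(a * Re z, b * Im z) = f1"
      hence "dist (a * Re z, b * Im z) (-c, 0) = 0" unfolding f1_def by simp
      thus False using focal[OF ab b0 cc that] dpos[OF that] by simp
    qed
    have zr: "z + rr \<noteq> 0" if "cmod z = 1" for z
    proof
      assume "z + rr = 0"
      hence "z = - rr" by (simp add: add_eq_0_iff)
      hence "cmod z = r" unfolding rr_def using r1 by simp
      thus False using that r1 by simp
    qed
    have rr1: "rr^2 - 1 \<noteq> 0"
    proof
      assume "rr^2 - 1 = 0"
      hence "complex_of_real (r^2 - 1) = 0" unfolding rr_def of_real_diff of_real_power of_real_1 .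
      hence "r^2 = 1" by (simp only: of_real_eq_0_iff)
      thus False using r1 by (simp add: power2_eq_1_iff)
    qed
    have brC: "2 * of_real b * rr = of_real c * (rr^2 - 1)"
    proof -
      have "complex_of_real (2 * b * r) = complex_of_real (c * (r^2 - 1))" using br by simp
      thus ?thesis unfolding rr_def by simp
    qed
    have b0C: "complex_of_real b \<noteq> 0" using b0 by simp
    have toCf1: "toC f1 = - of_real c" unfolding f1_def toC_def by (simp add: complex_eq_iff)
    have toCC9: "toC C9 = - of_real c * (1 + of_real rho^2 / (2 * of_real b^2))"
      unfolding C9_def toC_def by (simp add: complex_eq_iff)
    have vd: "toC (invert f1 rho (a * Re z, b * Im z)) - toC C9
        = of_real (rho^2) * (2 * rr / of_real c) * (z / (z+rr)^2 + rr / (rr^2-1)^2)" if z: "cmod z = 1" for z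
    proof -
      define cq where "cq = cnj (toC (a * Re z, b * Im z) - toC f1)"
      have cq: "cq * (2 * rr * z) = of_real c * (z + rr)^2"
        using cnj_focal[OF z rc rab] unfolding cq_def f1_def rr_def .
      have z0: "z \<noteq> 0" using z by auto
      have zr0: "z + rr \<noteq> 0" using zr[OF z] .
      have cq0: "cq \<noteq> 0"
      proof
        assume "cq = 0"
        hence "of_real c * (z + rr)^2 = 0" using cq by simp
        thus False using c0' zr0 by simp
      qed
      have icq: "1 / cq = 2 * rr * z / (of_real c * (z + rr)^2)"
        using cq cq0 c0' zr0 by (simp add: field_simps)
      have "toC (invert f1 rho (a * Re z, b * Im z)) = toC f1 + of_real (rho^2) / cq"
        unfolding cq_def by (rule toC_invert[OF ne[OF z]])
      hence "toC (invert f1 rho (a * Re z, b * Im z)) - toC C9 = of_real (rho^2) * (1/cq) + of_real c * of_real rho^2 / (2 * of_real b^2)"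
        unfolding toCf1 toCC9 by (simp add: field_simps)
      also have "\<dots> = of_real (rho^2) * (2 * rr / of_real c) * (z / (z+rr)^2 + rr / (rr^2-1)^2)"
      proof -
        have bsq: "of_real c / (2 * (complex_of_real b)^2) = (2 * rr / of_real c) * (rr / (rr^2-1)^2)"
        proof -
          have "(2 * of_real b * rr)^2 = (of_real c * (rr^2 - 1))^2" using brC by simp
          hence sq: "(2 * of_real b * rr)^2 = (of_real c * (rr^2 - 1))^2" .
          have "(2 * rr / of_real c) * (rr / (rr^2-1)^2) = (2 * rr * rr) / (of_real c * (rr^2-1)^2)" by simp
          moreover have "of_real c / (2 * (complex_of_real b)^2) = (2 * rr * rr) / (of_real c * (rr^2-1)^2)"
          proof (subst frac_eq_eq)
            show "2 * (complex_of_real b)^2 \<noteq> 0" using b0C by simp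
            show "of_real c * (rr^2-1)^2 \<noteq> 0" using c0' rr1 by simp
            show "of_real c * (of_real c * (rr^2-1)^2) = 2 * rr * rr * (2 * (complex_of_real b)^2)"
              using sq by algebra
          qed
          ultimately show ?thesis by simp
        qed
        have x1: "complex_of_real c * of_real rho^2 / (2 * of_real b^2) = of_real (rho^2) * (of_real c / (2 * of_real b^2))"
          by simp
        have x2: "2 * rr * z / (of_real c * (z + rr)^2) = (2 * rr / of_real c) * (z / (z+rr)^2)" by simp
        show ?thesis unfolding icq x1 x2 bsq by (simp add: distrib_left mult.assoc)
      qed
      finally show ?thesis .
    qed
    define d1 d2 d3 where "d1 = a + c * Re z1" "d2 = a + c * Re z2" "d3 = a + c * Re z3"
    have d1p: "d1 > 0" and d2p: "d2 > 0" and d3p: "d3 > 0" unfolding d1_d2_d3_def using dpos z1 z2 z3 by auto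
    have fd1: "dist P1 f1 = d1" unfolding P1 f1_def d1_d2_d3_def by (rule focal[OF ab b0 cc z1])
    have fd2: "dist P2 f1 = d2" unfolding P2 f1_def d1_d2_d3_def by (rule focal[OF ab b0 cc z2])
    have fd3: "dist P3 f1 = d3" unfolding P3 f1_def d1_d2_d3_def by (rule focal[OF ab b0 cc z3])
    have ne1: "P1 \<noteq> f1" using ne[OF z1] P1 by simp
    have ne2: "P2 \<noteq> f1" using ne[OF z2] P2 by simp
    have ne3: "P3 \<noteq> f1" using ne[OF z3] P3 by simp
    define V1 V2 V3 where "V1 = invert f1 rho P1" "V2 = invert f1 rho P2" "V3 = invert f1 rho P3"
    define mu where "mu = rho^2 / (2 * J * d1 * d2 * d3)"
    have mu0: "mu \<noteq> 0" unfolding mu_def using rho0 J0 d1p d2p d3p by simp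
    have dP: "dist P2 P3 = N23" "dist P3 P1 = N13" "dist P1 P2 = N12"
      unfolding N12_N13_N23_def dist_norm by (simp_all add: norm_minus_commute)
    have la: "dist V2 V3 = mu * (Q23 * d1)"
      unfolding V1_V2_V3_def dist_invert[OF ne2 ne3] fd2 fd3 dP hQ23 mu_def
      using J0 d1p d2p d3p by (simp add: field_simps)
    have lb: "dist V3 V1 = mu * (Q13 * d2)"
      unfolding V1_V2_V3_def dist_invert[OF ne3 ne1] fd3 fd1 dP hQ13 mu_def
      using J0 d1p d2p d3p by (simp add: field_simps)
    have lc: "dist V1 V2 = mu * (Q12 * d3)"
      unfolding V1_V2_V3_def dist_invert[OF ne1 ne2] fd1 fd2 dP hQ12 mu_def
      using J0 d1p d2p d3p by (simp add: field_simps)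
    define lam where "lam = - of_real c / (2 * rr * (z1 * z2 * z3))"
    have e30: "z1 * z2 * z3 \<noteq> 0" using z1 z2 z3 by auto
    have rr0: "rr \<noteq> 0" unfolding rr_def using r1 by simp
    have lam0: "lam \<noteq> 0" unfolding lam_def using c0' e30 rr0 by simp
    have Lgen: "of_real l * (2 * rr * (z1 * z2 * z3)) = - of_real c * m \<Longrightarrow> complex_of_real l = lam * m" for l m
      unfolding lam_def using e30 rr0 by (simp add: field_simps)
    have L1: "complex_of_real (Q23 * d1) = lam * mi rr z1 z2 z3"
      by (rule Lgen) (use ell_c[OF z1 z2 z3 ar] in \<open>simp add: Q12_Q13_Q23_def d1_d2_d3_def mi_def rr_def\<close>)
    have L2: "complex_of_real (Q13 * d2) = lam * mi rr z2 z3 z1"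
      by (rule Lgen) (use ell_c[OF z2 z3 z1 ar] in \<open>simp add: Q12_Q13_Q23_def d1_d2_d3_def mi_def rr_def norm_minus_commute mult.commute mult.left_commute\<close>)
    have L3: "complex_of_real (Q12 * d3) = lam * mi rr z3 z1 z2"
      by (rule Lgen) (use ell_c[OF z3 z1 z2 ar] in \<open>simp add: Q12_Q13_Q23_def d1_d2_d3_def mi_def rr_def mult.commute mult.left_commute\<close>)
    define l1 l2 l3 where "l1 = Q23 * d1" "l2 = Q13 * d2" "l3 = Q12 * d3"
    define m1 m2 m3 where "m1 = mi rr z1 z2 z3" "m2 = mi rr z2 z3 z1" "m3 = mi rr z3 z1 z2"
    define W where "W = l1*(l2+l3-l1) + l2*(l3+l1-l2) + l3*(l1+l2-l3)"
    define MMv where "MMv = MM rr z1 z2 z3"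
    have L1': "complex_of_real l1 = lam * m1" using L1 unfolding l1_l2_l3_def m1_m2_m3_def .
    have L2': "complex_of_real l2 = lam * m2" using L2 unfolding l1_l2_l3_def m1_m2_m3_def .
    have L3': "complex_of_real l3 = lam * m3" using L3 unfolding l1_l2_l3_def m1_m2_m3_def .
    have MMe: "MMv = m1*(m2+m3-m1) + m2*(m3+m1-m2) + m3*(m1+m2-m3)" unfolding MMv_def MM_def m1_m2_m3_def ..
    have Wc1: "complex_of_real (l1*(l2+l3-l1)) = lam^2 * (m1*(m2+m3-m1))" unfolding of_real_mult of_real_add of_real_diff L1' L2' L3'
      by (simp add: algebra_simps power2_eq_square)
    have Wc2: "complex_of_real (l2*(l3+l1-l2)) = lam^2 * (m2*(m3+m1-m2))" unfolding of_real_mult of_real_add of_real_diff L1' L2' L3'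
      by (simp add: algebra_simps power2_eq_square)
    have Wc3: "complex_of_real (l3*(l1+l2-l3)) = lam^2 * (m3*(m1+m2-m3))" unfolding of_real_mult of_real_add of_real_diff L1' L2' L3'
      by (simp add: algebra_simps power2_eq_square)
    have WC: "complex_of_real W = lam^2 * MMv" unfolding W_def of_real_add Wc1 Wc2 Wc3 MMe by (simp add: algebra_simps)
    have MM0: "MMv \<noteq> 0" unfolding MMv_def MM_disc using rr1 z12 z13 z23 by simp
    have W0: "W \<noteq> 0"
    proof
      assume "W = 0"
      hence "lam^2 * MMv = 0" using WC by simp
      thus False using lam0 MM0 by simp
    qed
    have ms: "toC (mittenpunkt V1 V2 V3) = (of_real (l1*(l2+l3-l1)) * toC V1 + of_real (l2*(l3+l1-l2)) * toC V2 + of_real (l3*(l1+l2-l3)) * toC V3) / of_real W"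
      unfolding W_def l1_l2_l3_def by (rule mitt_scale[OF la lb lc mu0]) (use W0 in \<open>simp add: W_def l1_l2_l3_def\<close>)
    define g1 g2 g3 where "g1 = z1 / (z1+rr)^2 + rr / (rr^2-1)^2" "g2 = z2 / (z2+rr)^2 + rr / (rr^2-1)^2"
      "g3 = z3 / (z3+rr)^2 + rr / (rr^2-1)^2"
    define kk where "kk = complex_of_real (rho^2) * (2 * rr / of_real c)"
    have vd1: "toC V1 - toC C9 = kk * g1" unfolding V1_V2_V3_def P1 kk_def g1_g2_g3_def by (rule vd[OF z1])
    have vd2: "toC V2 - toC C9 = kk * g2" unfolding V1_V2_V3_def P2 kk_def g1_g2_g3_def by (rule vd[OF z2])
    have vd3: "toC V3 - toC C9 = kk * g3" unfolding V1_V2_V3_def P3 kk_def g1_g2_g3_def by (rule vd[OF z3])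
    define Pi where "Pi = (rr+z1)*(rr+z2)*(rr+z3)"
    define S2 where "S2 = (rr^2-1)^2 * AA rr z1 z2 z3 + rr*(rr+z1)*(rr+z2)*(rr+z3)* MM rr z1 z2 z3"
    have sw: "m1*(m2+m3-m1)* g1 + m2*(m3+m1-m2)* g2 + m3*(m1+m2-m3)* g3 = S2 / ((rr^2-1)^2 * Pi)"
      unfolding m1_m2_m3_def g1_g2_g3_def S2_def Pi_def by (rule sumW[OF zr[OF z1] zr[OF z2] zr[OF z3] rr1])
    have Xc: "toC (mittenpunkt V1 V2 V3) - toC C9 = kk * S2 / ((rr^2-1)^2 * Pi * MMv)"
    proof -
      have WCs: "complex_of_real W = of_real (l1*(l2+l3-l1)) + of_real (l2*(l3+l1-l2)) + of_real (l3*(l1+l2-l3))"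
        unfolding W_def by simp
      have WC0: "complex_of_real W \<noteq> 0" using W0 by simp
      have "toC (mittenpunkt V1 V2 V3) - toC C9 =
          (of_real (l1*(l2+l3-l1)) * (toC V1 - toC C9) + of_real (l2*(l3+l1-l2)) * (toC V2 - toC C9)
           + of_real (l3*(l1+l2-l3)) * (toC V3 - toC C9)) / of_real W"
        unfolding ms by (rule wavg[OF WCs[symmetric] WC0])
      also have "\<dots> = lam^2 * kk * (m1*(m2+m3-m1)* g1 + m2*(m3+m1-m2)* g2 + m3*(m1+m2-m3)* g3) / (lam^2 * MMv)"
        unfolding vd1 vd2 vd3 Wc1 Wc2 Wc3 WC by (simp add: algebra_simps)
      also have "\<dots> = kk * (S2 / ((rr^2-1)^2 * Pi)) / MMv" unfolding sw using lam0 by simp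
      also have "\<dots> = kk * S2 / ((rr^2-1)^2 * Pi * MMv)" by simp
      finally show ?thesis .
    qed
    define Ps where "Ps = rr^3* w+t* rr^2-t* rr* w-1"
    have keyS: "(rr^2+1)* S2 = -((3-t)* rr^2* MMv* Ps)"
      using key unfolding S2_def MMv_def Ps_def by (simp add: eq_neg_iff_add_eq_0)
    have PiE: "Pi = rr^3 + t* w* rr^2 - t* rr - w"
    proof -
      have "Pi = rr^3 + (z1+z2+z3)* rr^2 + (z1* z2+z1* z3+z2* z3)* rr + z1* z2* z3" unfolding Pi_def by algebra
      thus ?thesis unfolding E1 E2 E3 by (simp add: algebra_simps)
    qed
    have cwc: "cnj w * w = 1" using unit_cnj[OF cw] .
    have cPi: "cnj Pi = rr^3 + t * cnj w * rr^2 - t* rr - cnj w" unfolding PiE rr_def t_def by simp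
    have PsPi: "Ps = w * cnj Pi" unfolding cPi Ps_def using cwc by algebra
    have nPs: "cmod Ps = cmod Pi" unfolding PsPi using cw by (simp add: norm_mult complex_mod_cnj)
    have Pi0: "Pi \<noteq> 0" unfolding Pi_def using zr[OF z1] zr[OF z2] zr[OF z3] by (simp add: add.commute)
    have rp1: "rr^2 + 1 \<noteq> 0"
    proof -
      have "complex_of_real (r^2 + 1) \<noteq> 0" by (metis of_real_eq_0_iff add_pos_pos zero_less_one zero_less_power2 r1 less_irrefl not_one_less_zero power2_less_0 add_nonneg_pos zero_le_power2)
      thus ?thesis unfolding rr_def by simp
    qed
    define Rv where "Rv = rho^2 * (2 * r / c) * (3 - tR) * r^2 / ((r^2 + 1) * (r^2 - 1)^2)"
    have Xc2: "toC (mittenpunkt V1 V2 V3) - toC C9 = - of_real Rv * Ps / Pi"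
    proof -
      have S2e: "S2 = -((3-t)* rr^2* MMv* Ps) / (rr^2+1)" using keyS rp1 by (simp add: field_simps)
      have "toC (mittenpunkt V1 V2 V3) - toC C9 = kk * (-((3-t)* rr^2* MMv* Ps) / (rr^2+1)) / ((rr^2-1)^2 * Pi * MMv)"
        using Xc unfolding S2e .
      also have "\<dots> = - (kk * ((3-t) * rr^2) / ((rr^2+1) * (rr^2-1)^2)) * Ps / Pi"
        by (rule canc2[OF MM0 rp1 _ Pi0]) (use rr1 in simp)
      also have "kk * ((3-t) * rr^2) / ((rr^2+1) * (rr^2-1)^2) = of_real Rv"
        unfolding kk_def t_def rr_def Rv_def by simp
      finally show ?thesis by simp
    qed
    have tR3: "tR < 3"
    proof -
      have "r^2 * tR^2 < 3 * r^2"
      proof -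
        have "r^4 + 1 > 0" by (simp add: add_nonneg_pos)
        hence "(r^4+1) * tR > 0" using tR0 by simp
        thus ?thesis using relR by linarith
      qed
      hence "tR^2 < 3" using r1 by simp
      show ?thesis
      proof (rule ccontr)
        assume "\<not> tR < 3"
        hence "3^2 \<le> tR^2" by (intro power_mono) auto
        thus False using \<open>tR^2 < 3\<close> by simp
      qed
    qed
    have Rv0: "Rv > 0"
    proof -
      have r21: "r^2 - 1 > 0" using r1 by (simp add: one_less_power)
      have n1: "rho^2 > 0" using rho0 by simp
      have n2: "2 * r / c > 0" using r1 c0 by simp
      have n3: "3 - tR > 0" using tR3 by simp
      have n4: "r^2 > 0" using r1 by simp
      have num: "rho^2 * (2 * r / c) * (3 - tR) * r^2 > 0" using n1 n2 n3 n4 by (intro mult_pos_pos) auto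
      have den: "(r^2 + 1) * (r^2 - 1)^2 > 0" using r21 by (intro mult_pos_pos) auto
      show ?thesis unfolding Rv_def using num den by (rule divide_pos_pos)
    qed
    have dXc: "dist (mittenpunkt V1 V2 V3) C9 = Rv"
    proof -
      have "dist (mittenpunkt V1 V2 V3) C9 = cmod (- of_real Rv * Ps / Pi)" unfolding dist_toC Xc2 ..
      also have "\<dots> = Rv" using Rv0 Pi0 nPs by (simp add: norm_mult norm_divide)
      finally show ?thesis .
    qed
    have dX: "\<delta> = (a^2 + b^2 + tR * c^2) / 2"
    proof -
      have X0: "(a^2 + b^2 + tR * c^2) / 2 \<ge> 0" using tR0 by simp
      have tc: "tR^2 * c^4 = 3 * c^4 - 2 * tR * c^2 * (a^2 + b^2)"
        using cay unfolding sR_def tR_def by algebra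
      have c4: "c^4 = (a^2 - b^2)^2" using c2 by (metis power2_eq_square power4_eq_xxxx mult.assoc)
      have "((a^2 + b^2 + tR * c^2) / 2)^2 = ((a^2 + b^2)^2 + 2 * tR * c^2 * (a^2 + b^2) + tR^2 * c^4) / 4"
        by (simp add: power2_eq_square power4_eq_xxxx field_simps)
      also have "\<dots> = ((a^2 + b^2)^2 + 3 * c^4) / 4" unfolding tc by simp
      also have "\<dots> = a^4 - a^2 * b^2 + b^4" unfolding c4 by (simp add: power2_eq_square power4_eq_xxxx field_simps)
      finally have "((a^2 + b^2 + tR * c^2) / 2)^2 = a^4 - a^2 * b^2 + b^4" .
      hence "\<delta> = sqrt (((a^2 + b^2 + tR * c^2) / 2)^2)" unfolding \<delta>_def by simp
      also have "\<dots> = (a^2 + b^2 + tR * c^2) / 2" using X0 by (simp only: real_sqrt_abs abs_of_nonneg)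
      finally show ?thesis .
    qed
    have "R9 = Rv"
    proof -
      have e1': "r^2 + 1 = 2 * a * r / c" using ar c0 by (simp add: field_simps)
      have "r^2 - 1 = 2 * b * r / c" using br c0 by (simp add: field_simps)
      hence e2': "(r^2 - 1)^2 = (2 * b * r / c)^2" by simp
      have "Rv = rho^2 * (3 - tR) * c^2 / (4 * a * b^2)"
        unfolding Rv_def e1' e2' using c0 a0 b0 r1 by (simp add: field_simps power2_eq_square)
      moreover have "R9 = rho^2 * (3 - tR) * c^2 / (4 * a * b^2)"
        unfolding R9_def dX using c2 a0 b0 by (simp add: field_simps power2_eq_square; algebra)
      ultimately show ?thesis by simp
    qed
    thus "dist (mittenpunkt (invert f1 rho P1) (invert f1 rho P2) (invert f1 rho P3)) C9 = R9"
      using dXc unfolding V1_V2_V3_def by simp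
  qed
  show ?thesis using part1 part2 by blast
qed


end
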